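(* Let $G$ be a block graph on $n$ vertices, i.e. a connected finite simple graph every block of which (maximal connected subgraph without a cut-vertex) is a clique, and let $w:E(G)\to\mathbb{R}_{>0}$ be a positive edge-weighting. For each edge $e$ define $C_w(e)$ as the maximum of $w(C)=\sum_{f\in E(C)}w(f)$ over all cycles $C\subseteq G$ containing $e$ if $e$ lies on a cycle, and $C_w(e)=2w(e)$ if $e$ is a bridge. If $\sum_{e\in E(G)}\frac{w(e)}{C_w(e)}=\frac{n-1}{2}$, then for every clique block $K$ of $G$ with $|V(K)|\ge 4$, the restriction of $w$ to $E(K)$ is vertex-induced, i.e. there exists $a_K:V(K)\to\mathbb{R}_{\ge0}$ with $w(uv)=\frac{a_K(u)+a_K(v)}{2}$ for all $uv\in E(K)$.
   Context: A bridge is an edge lying on no cycle. *)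

theory Defs
  imports Complex_Main
begin

definition simple_graph :: "'a set \<Rightarrow> 'a set set \<Rightarrow> bool" where
  "simple_graph V E \<longleftrightarrow> finite V \<and>
     (\<forall>e\<in>E. \<exists>u v. e = {u, v} \<and> u \<noteq> v \<and> u \<in> V \<and> v \<in> V)"

definition graph_connected :: "'a set \<Rightarrow> 'a set set \<Rightarrow> bool" where
  "graph_connected V E \<longleftrightarrow> V \<noteq> {} \<and>
     (\<forall>x\<in>V. \<forall>y\<in>V. (\<lambda>a b. {a, b} \<in> E)\<^sup>*\<^sup>* x y)"

definition subgraph :: "'a set \<Rightarrow> 'a set set \<Rightarrow> 'a set \<Rightarrow> 'a set set \<Rightarrow> bool" where
  "subgraph VH EH V E \<longleftrightarrow> VH \<subseteq> V \<and> EH \<subseteq> E \<and> (\<forall>e\<in>EH. e \<subseteq> VH)"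

definition cut_vertex :: "'a set \<Rightarrow> 'a set set \<Rightarrow> 'a \<Rightarrow> bool" where
  "cut_vertex VH EH v \<longleftrightarrow> v \<in> VH \<and>
     (\<exists>x\<in>VH - {v}. \<exists>y\<in>VH - {v}.
        \<not> (\<lambda>a b. {a, b} \<in> {e\<in>EH. v \<notin> e})\<^sup>*\<^sup>* x y)"

definition connected_no_cut :: "'a set \<Rightarrow> 'a set set \<Rightarrow> bool" where
  "connected_no_cut VH EH \<longleftrightarrow> graph_connected VH EH \<and> (\<forall>v. \<not> cut_vertex VH EH v)"

definition is_block :: "'a set \<Rightarrow> 'a set set \<Rightarrow> 'a set \<Rightarrow> 'a set set \<Rightarrow> bool" where
  "is_block V E VB EB \<longleftrightarrow> subgraph VB EB V E \<and> connected_no_cut VB EB \<and>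
     (\<forall>VH EH. subgraph VH EH V E \<and> connected_no_cut VH EH \<and> VB \<subseteq> VH \<and> EB \<subseteq> EH
        \<longrightarrow> VH = VB \<and> EH = EB)"

definition is_clique :: "'a set \<Rightarrow> 'a set set \<Rightarrow> bool" where
  "is_clique VH EH \<longleftrightarrow> (\<forall>u\<in>VH. \<forall>v\<in>VH. u \<noteq> v \<longrightarrow> {u, v} \<in> EH)"

definition block_graph :: "'a set \<Rightarrow> 'a set set \<Rightarrow> bool" where
  "block_graph V E \<longleftrightarrow> simple_graph V E \<and> graph_connected V E \<and>
     (\<forall>VB EB. is_block V E VB EB \<longrightarrow> is_clique VB EB)"

definition cycle_edges :: "'a list \<Rightarrow> 'a set set" where
  "cycle_edges c = {{c ! i, c ! ((i + 1) mod length c)} | i. i < length c}"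

definition is_cycle :: "'a set \<Rightarrow> 'a set set \<Rightarrow> 'a list \<Rightarrow> bool" where
  "is_cycle V E c \<longleftrightarrow> length c \<ge> 3 \<and> distinct c \<and> set c \<subseteq> V \<and> cycle_edges c \<subseteq> E"

definition cycle_weight :: "('a set \<Rightarrow> real) \<Rightarrow> 'a list \<Rightarrow> real" where
  "cycle_weight w c = (\<Sum>f\<in>cycle_edges c. w f)"

definition Cw :: "'a set \<Rightarrow> 'a set set \<Rightarrow> ('a set \<Rightarrow> real) \<Rightarrow> 'a set \<Rightarrow> real" where
  "Cw V E w e = (if \<exists>c. is_cycle V E c \<and> e \<in> cycle_edges c
      then Max (cycle_weight w ` {c. is_cycle V E c \<and> e \<in> cycle_edges c})
      else 2 * w e)"

end

theory Submission
  imports Defs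
begin

fun walkr :: "'a set set \<Rightarrow> 'a list \<Rightarrow> bool" where
  "walkr E [] = True"
| "walkr E [x] = True"
| "walkr E (x # y # xs) = ({x, y} \<in> E \<and> walkr E (y # xs))"

fun psum :: "('a set \<Rightarrow> real) \<Rightarrow> 'a list \<Rightarrow> real" where
  "psum w [] = 0"
| "psum w [x] = 0"
| "psum w (x # y # xs) = w {x, y} + psum w (y # xs)"

lemma walkr_nth: "walkr E xs \<longleftrightarrow> (\<forall>i. Suc i < length xs \<longrightarrow> {xs!i, xs!Suc i} \<in> E)"
proof (induction E xs rule: walkr.induct)
  case (3 E x y xs)
  show ?case
  proof
    assume h: "walkr E (x # y # xs)"
    show "\<forall>i. Suc i < length (x # y # xs) \<longrightarrow> {(x # y # xs) ! i, (x # y # xs) ! Suc i} \<in> E"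
    proof (intro allI impI)
      fix i assume "Suc i < length (x # y # xs)"
      then show "{(x # y # xs) ! i, (x # y # xs) ! Suc i} \<in> E"
        using h 3 by (cases i) auto
    qed
  next
    assume h: "\<forall>i. Suc i < length (x # y # xs) \<longrightarrow> {(x # y # xs) ! i, (x # y # xs) ! Suc i} \<in> E"
    have "{x,y} \<in> E" using h[rule_format, of 0] by simp
    moreover have "walkr E (y # xs)" unfolding 3
    proof (intro allI impI)
      fix i assume "Suc i < length (y # xs)"
      then show "{(y # xs) ! i, (y # xs) ! Suc i} \<in> E" using h[rule_format, of "Suc i"] by simp
    qed
    ultimately show "walkr E (x # y # xs)" by simp
  qed
qed auto

lemma psum_nth: "psum w xs = (\<Sum>i<length xs - 1. w {xs!i, xs!Suc i})"
proof (induction w xs rule: psum.induct)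
  case (3 w x y xs)
  have "(\<Sum>i<length (x # y # xs) - 1. w {(x # y # xs) ! i, (x # y # xs) ! Suc i})
      = (\<Sum>i<Suc (length (y # xs) - 1). w {(x # y # xs) ! i, (x # y # xs) ! Suc i})" by simp
  also have "\<dots> = w {x, y} + (\<Sum>i<length (y # xs) - 1. w {(y # xs) ! i, (y # xs) ! Suc i})"
    by (subst sum.lessThan_Suc_shift) simp
  finally show ?case using 3 by simp
qed auto

lemma ce_alt:
  assumes "c \<noteq> []"
  shows "cycle_edges c = {{(c @ [hd c]) ! i, (c @ [hd c]) ! Suc i} | i. i < length c}"
proof -
  have "{c ! i, c ! ((i + 1) mod length c)} = {(c @ [hd c]) ! i, (c @ [hd c]) ! Suc i}"
    if "i < length c" for i
  proof (cases "Suc i < length c")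
    case True then show ?thesis using that by (simp add: nth_append)
  next
    case False
    then have "Suc i = length c" using that by simp
    then show ?thesis using that assms by (simp add: nth_append hd_conv_nth)
  qed
  then show ?thesis unfolding cycle_edges_def by (metis (no_types, opaque_lifting))
qed

lemma ce_subset_walkr:
  assumes "c \<noteq> []"
  shows "cycle_edges c \<subseteq> E \<longleftrightarrow> walkr E (c @ [hd c])"
  unfolding ce_alt[OF assms] walkr_nth by auto

lemma ce_inj:
  assumes "distinct c" "length c \<ge> 3"
  shows "inj_on (\<lambda>i. {c!i, c!((i+1) mod length c)}) {..<length c}"
proof
  fix i j assume i: "i \<in> {..<length c}" and j: "j \<in> {..<length c}"
    and eq: "{c!i, c!((i+1) mod length c)} = {c!j, c!((j+1) mod length c)}"
  let ?n = "length c"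
  have np: "?n > 0" using assms by auto
  have ni: "(i+1) mod ?n < ?n" "(j+1) mod ?n < ?n" using np by auto
  show "i = j"
  proof (rule ccontr)
    assume "i \<noteq> j"
    then have "c!i \<noteq> c!j" using i j assms(1) by (simp add: nth_eq_iff_index_eq)
    then have "c!i = c!((j+1) mod ?n) \<and> c!j = c!((i+1) mod ?n)" using eq by (auto simp: doubleton_eq_iff)
    then have e1: "i = (j+1) mod ?n" and e2: "j = (i+1) mod ?n"
      using i j ni nth_eq_iff_index_eq[OF assms(1)] by (metis lessThan_iff)+
    from e1 have "i = ((i+1) mod ?n + 1) mod ?n" by (subst (asm) e2)
    then have "i = (i + 2) mod ?n" by (simp add: mod_Suc_eq)
    moreover have "(i + 2) mod ?n \<noteq> i"
    proof (cases "i + 2 < ?n")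
      case True then show ?thesis by simp
    next
      case False
      have lt: "i + 2 - ?n < ?n" using i assms(2) by simp
      have "(i + 2) mod ?n = (i + 2 - ?n) mod ?n" using False by (simp add: le_mod_geq)
      then have "(i + 2) mod ?n = i + 2 - ?n" using lt by simp
      then show ?thesis using i assms(2) False by simp
    qed
    ultimately show False by simp
  qed
qed

lemma card_ce:
  assumes "distinct c" "length c \<ge> 3"
  shows "card (cycle_edges c) = length c"
proof -
  have "cycle_edges c = (\<lambda>i. {c!i, c!((i+1) mod length c)}) ` {..<length c}"
    unfolding cycle_edges_def by auto
  then show ?thesis using card_image[OF ce_inj[OF assms]] by simp
qed

lemma cw_psum:
  assumes "distinct c" "length c \<ge> 3"
  shows "cycle_weight w c = psum w (c @ [hd c])"
proof -
  have ne: "c \<noteq> []" using assms by auto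
  have "cycle_edges c = (\<lambda>i. {c!i, c!((i+1) mod length c)}) ` {..<length c}"
    unfolding cycle_edges_def by auto
  then have "cycle_weight w c = (\<Sum>i<length c. w {c!i, c!((i+1) mod length c)})"
    unfolding cycle_weight_def using sum.reindex[OF ce_inj[OF assms], of w] by simp
  also have "\<dots> = (\<Sum>i<length c. w {(c @ [hd c]) ! i, (c @ [hd c]) ! Suc i})"
  proof (rule sum.cong[OF refl])
    fix i assume i: "i \<in> {..<length c}"
    show "w {c!i, c!((i+1) mod length c)} = w {(c @ [hd c]) ! i, (c @ [hd c]) ! Suc i}"
    proof (cases "Suc i < length c")
      case True then show ?thesis using i by (simp add: nth_append)
    next
      case False
      then have "Suc i = length c" using i by simp
      then show ?thesis using i ne by (simp add: nth_append hd_conv_nth)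
    qed
  qed
  also have "\<dots> = psum w (c @ [hd c])" by (simp add: psum_nth)
  finally show ?thesis .
qed

definition clq :: "'a set set \<Rightarrow> 'a set \<Rightarrow> bool" where
  "clq E Q \<longleftrightarrow> (\<forall>x\<in>Q. \<forall>y\<in>Q. x \<noteq> y \<longrightarrow> {x, y} \<in> E)"

lemma walkr_take: "walkr E xs \<Longrightarrow> walkr E (take n xs)"
  by (simp add: walkr_nth)

lemma walkr_drop: "walkr E xs \<Longrightarrow> walkr E (drop n xs)"
  by (simp add: walkr_nth add.commute)

lemma walkr_append:
  "walkr E (xs @ ys) \<longleftrightarrow> walkr E xs \<and> walkr E ys \<and> (xs \<noteq> [] \<and> ys \<noteq> [] \<longrightarrow> {last xs, hd ys} \<in> E)"
proof (induction E xs rule: walkr.induct)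
  case (1 E) then show ?case by simp
next
  case (2 E x) then show ?case by (cases ys) auto
next
  case (3 E x y xs) then show ?case by auto
qed

lemma walkr_reach:
  assumes "walkr E P" "P \<noteq> []" "x \<in> set P"
  shows "(\<lambda>a b. {a, b} \<in> E)\<^sup>*\<^sup>* (hd P) x"
  using assms
proof (induction P)
  case Nil then show ?case by simp
next
  case (Cons a xs)
  show ?case
  proof (cases "x = a")
    case True then show ?thesis by simp
  next
    case False
    then have xs: "xs \<noteq> []" "x \<in> set xs" using Cons.prems by auto
    then obtain b ys where bys: "xs = b # ys" by (cases xs) auto
    have "walkr E xs" "{a, b} \<in> E" using Cons.prems(1) unfolding bys by auto
    then have "(\<lambda>a b. {a, b} \<in> E)\<^sup>*\<^sup>* b x" using Cons.IH xs unfolding bys by simp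
    then show ?thesis using \<open>{a, b} \<in> E\<close> by (auto intro: converse_rtranclp_into_rtranclp)
  qed
qed

lemma reach_sym:
  assumes "(\<lambda>a b. {a, b} \<in> E)\<^sup>*\<^sup>* x y"
  shows "(\<lambda>a b. {a, b} \<in> E)\<^sup>*\<^sup>* y x"
  using assms
proof (induction rule: rtranclp_induct)
  case (step y z)
  then have "{z, y} \<in> E" by (simp add: insert_commute)
  then show ?case using step(3) by (auto intro: converse_rtranclp_into_rtranclp)
qed auto

lemma walkr_connected:
  assumes "walkr E P" "P \<noteq> []" "x \<in> set P" "y \<in> set P"
  shows "(\<lambda>a b. {a, b} \<in> E)\<^sup>*\<^sup>* x y"
proof -
  have "(\<lambda>a b. {a, b} \<in> E)\<^sup>*\<^sup>* x (hd P)" using reach_sym walkr_reach[OF assms(1,2,3)] by fast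
  moreover have "(\<lambda>a b. {a, b} \<in> E)\<^sup>*\<^sup>* (hd P) y" using walkr_reach[OF assms(1,2,4)] .
  ultimately show ?thesis by (rule rtranclp_trans)
qed

lemma walkr_mono: "walkr E P \<Longrightarrow> (\<And>i. Suc i < length P \<Longrightarrow> {P!i, P!Suc i} \<in> E \<Longrightarrow> {P!i, P!Suc i} \<in> F) \<Longrightarrow> walkr F P"
  by (simp add: walkr_nth)

lemma path_exists:
  assumes "(\<lambda>a b. {a, b} \<in> E \<and> a \<in> A \<and> b \<in> A)\<^sup>*\<^sup>* a b" "a \<in> A"
  shows "\<exists>P. P \<noteq> [] \<and> hd P = a \<and> last P = b \<and> distinct P \<and> set P \<subseteq> A \<and> walkr E P"
  using assms
proof (induction rule: rtranclp_induct)
  case base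
  then show ?case by (intro exI[of _ "[a]"]) auto
next
  case (step b c)
  then obtain P where P: "P \<noteq> []" "hd P = a" "last P = b" "distinct P" "set P \<subseteq> A" "walkr E P" by auto
  show ?case
  proof (cases "c \<in> set P")
    case True
    obtain k where k: "k < length P" "P ! k = c" using True by (auto simp: in_set_conv_nth)
    have "take (Suc k) P \<noteq> []" using P(1) by simp
    moreover have "hd (take (Suc k) P) = a" using P(1,2) by (cases P) simp_all
    moreover have "last (take (Suc k) P) = c"
    proof -
      have "take (Suc k) P = take k P @ [P ! k]" using k(1) by (simp add: take_Suc_conv_app_nth)
      then show ?thesis using k(2) by simp
    qed
    moreover have "distinct (take (Suc k) P)" using P(4) by simp
    moreover have "set (take (Suc k) P) \<subseteq> A" using P(5) set_take_subset[of "Suc k" P] by (rule order_trans[rotated])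
    moreover have "walkr E (take (Suc k) P)" using P(6) walkr_take by blast
    ultimately show ?thesis by blast
  next
    case False
    have e: "{b, c} \<in> E" "c \<in> A" using step(2) by auto
    have "walkr E (P @ [c])" using P(1,3,6) e(1) walkr_append[of E P "[c]"] by simp
    moreover have "P @ [c] \<noteq> []" "hd (P @ [c]) = a" "last (P @ [c]) = c" using P(1,2) by auto
    moreover have "distinct (P @ [c])" using P(4) False by simp
    moreover have "set (P @ [c]) \<subseteq> A" using P(5) e(2) by simp
    ultimately show ?thesis by blast
  qed
qed

lemma cycle_walk:
  assumes "is_cycle V E c"
  shows "walkr (cycle_edges c) (c @ c)"
proof -
  have ne: "c \<noteq> []" using assms unfolding is_cycle_def by auto
  have w: "walkr (cycle_edges c) (c @ [hd c])" using ce_subset_walkr[OF ne] by blast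
  then have "walkr (cycle_edges c) c" "{last c, hd c} \<in> cycle_edges c"
    using ne by (auto simp: walkr_append)
  then show ?thesis using ne by (simp add: walkr_append)
qed

lemma cycle_cnc:
  assumes "is_cycle V E c"
  shows "connected_no_cut (set c) (cycle_edges c)"
proof -
  have ne: "c \<noteq> []" and d: "distinct c" and l3: "length c \<ge> 3" using assms unfolding is_cycle_def by auto
  have w2: "walkr (cycle_edges c) (c @ c)" using cycle_walk[OF assms] .
  have wc: "walkr (cycle_edges c) c" using w2 by (simp add: walkr_append)
  have conn: "graph_connected (set c) (cycle_edges c)"
    unfolding graph_connected_def using ne walkr_connected[OF wc ne] by simp
  have nocut: "\<not> cut_vertex (set c) (cycle_edges c) v" for v
  proof
    assume cv: "cut_vertex (set c) (cycle_edges c) v"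
    then have "v \<in> set c" unfolding cut_vertex_def by auto
    then obtain k where k: "k < length c" "c ! k = v" by (auto simp: in_set_conv_nth)
    define Q where "Q = drop (Suc k) c @ take k c"
    have Qeq: "Q = drop (Suc k) (take (k + length c) (c @ c))" unfolding Q_def using k by simp
    have wQ: "walkr (cycle_edges c) Q" unfolding Qeq using w2 walkr_take walkr_drop by blast
    have c_split: "c = take k c @ [v] @ drop (Suc k) c" using k id_take_nth_drop by fastforce
    have setQ: "set Q = set c - {v}"
    proof -
      have "distinct (take k c @ [v] @ drop (Suc k) c)" using d c_split by metis
      then have "v \<notin> set (take k c)" "v \<notin> set (drop (Suc k) c)" by auto
      moreover have "set c = set (take k c @ [v] @ drop (Suc k) c)" using c_split by metis
      then have "set c = set (take k c) \<union> {v} \<union> set (drop (Suc k) c)" by simp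
      ultimately show ?thesis unfolding Q_def by auto
    qed
    have Qne: "Q \<noteq> []"
    proof -
      have "card (set c - {v}) \<ge> 2" using l3 d k \<open>v \<in> set c\<close> by (simp add: distinct_card)
      show ?thesis
      proof
        assume "Q = []"
        then have "set c - {v} = {}" using setQ by simp
        then show False using \<open>card (set c - {v}) \<ge> 2\<close> by (metis card.empty not_numeral_le_zero)
      qed
    qed
    have wQ': "walkr {e \<in> cycle_edges c. v \<notin> e} Q"
    proof (rule walkr_mono[OF wQ])
      fix i assume "Suc i < length Q" "{Q ! i, Q ! Suc i} \<in> cycle_edges c"
      moreover have "Q ! i \<in> set Q" "Q ! Suc i \<in> set Q"
        using nth_mem[of i Q] nth_mem[of "Suc i" Q] \<open>Suc i < length Q\<close> by simp_all
      ultimately show "{Q ! i, Q ! Suc i} \<in> {e \<in> cycle_edges c. v \<notin> e}" using setQ by auto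
    qed
    from cv obtain x y where "x \<in> set c - {v}" "y \<in> set c - {v}"
      "\<not> (\<lambda>a b. {a, b} \<in> {e\<in>cycle_edges c. v \<notin> e})\<^sup>*\<^sup>* x y" unfolding cut_vertex_def by auto
    then show False using walkr_connected[OF wQ' Qne] setQ by auto
  qed
  show ?thesis unfolding connected_no_cut_def using conn nocut by auto
qed

lemma clq_cnc:
  assumes "clq E Q" "Q \<noteq> {}"
  shows "connected_no_cut Q {e\<in>E. e \<subseteq> Q}"
proof -
  have conn: "graph_connected Q {e\<in>E. e \<subseteq> Q}"
    unfolding graph_connected_def
  proof (intro conjI ballI)
    fix x y assume "x \<in> Q" "y \<in> Q"
    show "(\<lambda>a b. {a, b} \<in> {e \<in> E. e \<subseteq> Q})\<^sup>*\<^sup>* x y"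
    proof (cases "x = y")
      case False
      then have "{x, y} \<in> E" using assms(1) \<open>x \<in> Q\<close> \<open>y \<in> Q\<close> unfolding clq_def by blast
      then show ?thesis using \<open>x \<in> Q\<close> \<open>y \<in> Q\<close> by (intro r_into_rtranclp) simp
    qed simp
  qed (use assms in auto)
  have reach: "(\<lambda>a b. {a, b} \<in> {e \<in> {e \<in> E. e \<subseteq> Q}. v \<notin> e})\<^sup>*\<^sup>* x y"
    if "x \<in> Q" "y \<in> Q" "x \<noteq> v" "y \<noteq> v" for x y v
  proof (cases "x = y")
    case False
    then have "{x, y} \<in> E" using assms(1) \<open>x \<in> Q\<close> \<open>y \<in> Q\<close> unfolding clq_def by blast
    then show ?thesis using \<open>x \<in> Q\<close> \<open>y \<in> Q\<close> \<open>x \<noteq> v\<close> \<open>y \<noteq> v\<close> by (intro r_into_rtranclp) simp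
  qed simp
  have "\<not> cut_vertex Q {e\<in>E. e \<subseteq> Q} v" for v
    unfolding cut_vertex_def using reach by blast
  then show ?thesis unfolding connected_no_cut_def using conn by auto
qed

lemma finite_E:
  assumes "simple_graph V E"
  shows "finite E"
proof -
  have "E \<subseteq> Pow V" using assms unfolding simple_graph_def by auto
  then show ?thesis using assms unfolding simple_graph_def by (meson finite_Pow_iff finite_subset)
qed

lemma in_block:
  assumes sg: "simple_graph V E" and h: "subgraph VH EH V E" "connected_no_cut VH EH"
  shows "\<exists>VB EB. is_block V E VB EB \<and> VH \<subseteq> VB \<and> EH \<subseteq> EB"
proof -
  define Cs where "Cs = {(A, F). subgraph A F V E \<and> connected_no_cut A F \<and> VH \<subseteq> A \<and> EH \<subseteq> F}"
  have fV: "finite V" using sg unfolding simple_graph_def by auto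
  have fE: "finite E" using finite_E[OF sg] .
  have "Cs \<subseteq> Pow V \<times> Pow E" unfolding Cs_def subgraph_def by auto
  then have fC: "finite Cs" using fV fE by (meson finite_Pow_iff finite_SigmaI finite_subset)
  have "(VH, EH) \<in> Cs" using h unfolding Cs_def by auto
  then have neC: "Cs \<noteq> {}" by auto
  define f where "f = (\<lambda>(A::'a set, F::'a set set). card A + card F)"
  have "Max (f ` Cs) \<in> f ` Cs" using fC neC by simp
  then obtain AF where AF1: "AF \<in> Cs" "f AF = Max (f ` Cs)" by auto
  have "\<forall>x\<in>Cs. f x \<le> f AF" unfolding AF1(2) using fC by simp
  note AF = AF1(1) this
  obtain A F where AFe: "AF = (A, F)" by fastforce
  have AFc: "subgraph A F V E" "connected_no_cut A F" "VH \<subseteq> A" "EH \<subseteq> F"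
    using AF(1) unfolding AFe Cs_def by auto
  have "is_block V E A F"
    unfolding is_block_def
  proof (intro conjI allI impI)
    fix VH' EH' assume a: "subgraph VH' EH' V E \<and> connected_no_cut VH' EH' \<and> A \<subseteq> VH' \<and> F \<subseteq> EH'"
    then have "(VH', EH') \<in> Cs" using AFc unfolding Cs_def by auto
    then have le: "card VH' + card EH' \<le> card A + card F" using AF(2) unfolding AFe f_def by fastforce
    have fin: "finite VH'" "finite EH'" using a fV fE unfolding subgraph_def by (auto intro: finite_subset)
    have "card A \<le> card VH'" "card F \<le> card EH'" using a fin by (auto intro: card_mono)
    then have "card A = card VH'" "card F = card EH'" using le by auto
    then show "VH' = A" "EH' = F" using a fin by (metis card_subset_eq)+
  qed (use AFc in auto)
  then show ?thesis using AFc by auto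
qed

lemma ce_sub:
  assumes "e \<in> cycle_edges c"
  shows "e \<subseteq> set c"
proof -
  obtain i where i: "i < length c" "e = {c ! i, c ! ((i + 1) mod length c)}"
    using assms unfolding cycle_edges_def by auto
  then have "(i + 1) mod length c < length c" by (intro mod_less_divisor) (cases c; simp)
  then show ?thesis using i nth_mem by auto
qed

lemma cycle_clq:
  assumes bg: "block_graph V E" and c: "is_cycle V E c"
  shows "clq E (set c)"
proof -
  have sg: "simple_graph V E" using bg unfolding block_graph_def by auto
  have "subgraph (set c) (cycle_edges c) V E"
    using c ce_sub unfolding subgraph_def is_cycle_def by blast
  then obtain VB EB where b: "is_block V E VB EB" "set c \<subseteq> VB"
    using in_block[OF sg _ cycle_cnc[OF c]] by blast
  then have "is_clique VB EB" "EB \<subseteq> E" using bg unfolding block_graph_def is_block_def subgraph_def by auto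
  then show ?thesis using b(2) unfolding clq_def is_clique_def by blast
qed

definition mclq :: "'a set \<Rightarrow> 'a set set \<Rightarrow> 'a set \<Rightarrow> bool" where
  "mclq V E S \<longleftrightarrow> clq E S \<and> S \<subseteq> V \<and> (\<forall>Q. S \<subseteq> Q \<and> Q \<subseteq> V \<and> clq E Q \<longrightarrow> Q = S)"

definition rch :: "'a set set \<Rightarrow> 'a set \<Rightarrow> 'a \<Rightarrow> 'a \<Rightarrow> bool" where
  "rch E A = (\<lambda>a b. {a, b} \<in> E \<and> a \<in> A \<and> b \<in> A)\<^sup>*\<^sup>*"

lemma rch_sym: "rch E A a b \<Longrightarrow> rch E A b a"
  unfolding rch_def
proof (induction rule: rtranclp_induct)
  case (step y z)
  then have "{z, y} \<in> E \<and> z \<in> A \<and> y \<in> A" by (simp add: insert_commute)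
  then show ?case using step(3) by (auto intro: converse_rtranclp_into_rtranclp)
qed auto

lemma rch_mono: "rch E A a b \<Longrightarrow> A \<subseteq> A' \<Longrightarrow> rch E A' a b"
  unfolding rch_def by (erule rtranclp_mono[THEN predicate2D, rotated]) auto

lemma rch_step: "rch E A a b \<Longrightarrow> {b, c} \<in> E \<Longrightarrow> b \<in> A \<Longrightarrow> c \<in> A \<Longrightarrow> rch E A a c"
  unfolding rch_def by (auto intro: rtranclp.rtrancl_into_rtrancl)

lemma rch_cstep: "rch E A b c \<Longrightarrow> {a, b} \<in> E \<Longrightarrow> a \<in> A \<Longrightarrow> b \<in> A \<Longrightarrow> rch E A a c"
  unfolding rch_def by (auto intro: converse_rtranclp_into_rtranclp)

lemma edge_2:
  assumes "simple_graph V E" "e \<in> E"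
  obtains x y where "e = {x, y}" "x \<noteq> y" "x \<in> V" "y \<in> V"
  using assms unfolding simple_graph_def by blast

lemma cyc_edges_E:
  assumes "c \<noteq> []" "walkr E (c @ [hd c])"
  shows "cycle_edges c \<subseteq> E"
  using ce_subset_walkr[OF assms(1)] assms(2) by blast

lemma cyc4:
  assumes bg: "block_graph V E" and d: "distinct [a, b, c, d]" and inV: "{a, b, c, d} \<subseteq> V"
    and e: "{a, b} \<in> E" "{b, c} \<in> E" "{c, d} \<in> E" "{d, a} \<in> E"
  shows "{a, c} \<in> E"
proof -
  have "cycle_edges [a, b, c, d] \<subseteq> E" by (rule cyc_edges_E) (use e in auto)
  then have "is_cycle V E [a, b, c, d]" using d inV unfolding is_cycle_def by auto
  then have "clq E {a, b, c, d}" using cycle_clq[OF bg] by (metis list.set(1) list.set(2))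
  then show ?thesis using d unfolding clq_def by auto
qed

lemma attach:
  assumes bg: "block_graph V E" and S: "mclq V E S"
    and xy: "x \<in> S" "y \<in> S" and ab: "a \<in> V - S" "b \<in> V - S"
    and e: "{a, x} \<in> E" "{b, y} \<in> E" and r: "rch E (V - S) a b"
  shows "x = y"
proof (rule ccontr)
  assume xy_ne: "x \<noteq> y"
  have SV: "S \<subseteq> V" and cS: "clq E S" using S unfolding mclq_def by auto
  obtain P where P: "P \<noteq> []" "hd P = a" "last P = b" "distinct P" "set P \<subseteq> V - S" "walkr E P"
    using path_exists[OF r[unfolded rch_def] ab(1)] by blast
  define c where "c = x # P @ [y]"
  have xP: "x \<notin> set P" "y \<notin> set P" using P(5) xy by auto
  have "walkr E (P @ [y, x])"
  proof -
    have "{y, x} \<in> E" using cS xy xy_ne unfolding clq_def by auto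
    then have "walkr E [y, x]" by simp
    then show ?thesis using P(1,3,6) e(2) walkr_append[of E P "[y, x]"] by simp
  qed
  then have "walkr E (c @ [hd c])" unfolding c_def using P(1,2) e(1)
    by (cases P) (auto simp: insert_commute)
  then have "cycle_edges c \<subseteq> E" using cyc_edges_E[of c] unfolding c_def by simp
  moreover have "distinct c" using P(4) xP xy_ne unfolding c_def by auto
  moreover have "length c \<ge> 3" using P(1) unfolding c_def by (cases P) auto
  moreover have "set c \<subseteq> V" using P(5) xy SV unfolding c_def by auto
  ultimately have "is_cycle V E c" unfolding is_cycle_def by auto
  then have cc: "clq E (set c)" by (rule cycle_clq[OF bg])
  have aP: "a \<in> set P" using P(1,2) by (cases P) auto
  have ay: "{a, y} \<in> E" using cc aP xP unfolding clq_def c_def by auto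
  have "clq E (insert a S)"
    unfolding clq_def
  proof (intro ballI impI)
    have as: "{a, s} \<in> E" if s: "s \<in> S" for s
    proof (cases "s = x \<or> s = y")
      case True then show ?thesis using e(1) ay by auto
    next
      case False
      have "{x, s} \<in> E" "{s, y} \<in> E" using cS s xy False unfolding clq_def by auto
      moreover have "distinct [a, x, s, y]" using False xy_ne ab(1) xy s by auto
      moreover have "{a, x, s, y} \<subseteq> V" using ab(1) xy s SV by auto
      ultimately show ?thesis using cyc4[OF bg, of a x s y] e(1) ay by (simp add: insert_commute)
    qed
    fix p q assume "p \<in> insert a S" "q \<in> insert a S" "p \<noteq> q"
    then show "{p, q} \<in> E" using as cS unfolding clq_def by (metis insert_commute insert_iff)
  qed
  then have "insert a S = S" using S ab(1) unfolding mclq_def by blast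
  then show False using ab(1) by auto
qed

lemma mclq_exists:
  assumes fV: "finite V" and T: "T \<subseteq> V" "clq E T"
  shows "\<exists>S. mclq V E S \<and> T \<subseteq> S"
proof -
  define Cs where "Cs = {Q. T \<subseteq> Q \<and> Q \<subseteq> V \<and> clq E Q}"
  have fC: "finite Cs" unfolding Cs_def using fV by (simp add: finite_subset)
  have "T \<in> Cs" using T unfolding Cs_def by auto
  then have neC: "Cs \<noteq> {}" by auto
  have "Max (card ` Cs) \<in> card ` Cs" using fC neC by simp
  then obtain Q where Q: "Q \<in> Cs" "card Q = Max (card ` Cs)" by auto
  have mx: "\<forall>x\<in>Cs. card x \<le> card Q" unfolding Q(2) using fC by simp
  have "mclq V E Q" unfolding mclq_def
  proof (intro conjI allI impI)
    fix Q' assume a: "Q \<subseteq> Q' \<and> Q' \<subseteq> V \<and> clq E Q'"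
    then have "Q' \<in> Cs" using Q(1) unfolding Cs_def by auto
    then have "card Q' \<le> card Q" using mx by auto
    moreover have "finite Q'" using a fV finite_subset by blast
    ultimately show "Q' = Q" using a by (metis card_seteq)
  qed (use Q(1) Cs_def in auto)
  then show ?thesis using Q(1) unfolding Cs_def by auto
qed

lemma bridge_no_cycle:
  assumes bg: "block_graph V E" and S: "mclq V E {z, u}" "z \<noteq> u"
  shows "\<not> (\<exists>c. is_cycle V E c \<and> {z, u} \<in> cycle_edges c)"
proof
  assume "\<exists>c. is_cycle V E c \<and> {z, u} \<in> cycle_edges c"
  then obtain c where c: "is_cycle V E c" "{z, u} \<in> cycle_edges c" by blast
  have "{z, u} \<subseteq> set c" using ce_sub[OF c(2)] .
  moreover have "set c \<subseteq> V" "clq E (set c)" using c(1) cycle_clq[OF bg c(1)] unfolding is_cycle_def by auto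
  ultimately have "set c = {z, u}" using S(1) unfolding mclq_def by blast
  moreover have "card (set c) \<ge> 3" using c(1) unfolding is_cycle_def by (simp add: distinct_card)
  ultimately show False using S(2) by simp
qed

lemma enter_S:
  assumes "rch E U a s" "a \<notin> S" "s \<in> S"
  shows "\<exists>u z. u \<in> U - S \<and> z \<in> S \<and> {u, z} \<in> E"
  using assms unfolding rch_def
proof (induction rule: converse_rtranclp_induct)
  case base then show ?case by simp
next
  case (step a a')
  show ?case
  proof (cases "a' \<in> S")
    case True then show ?thesis using step(1,4) by auto
  next
    case False then show ?thesis using step by auto
  qed
qed

lemma R_aux:
  fixes g :: "'a set \<Rightarrow> real"
  assumes bg: "block_graph V E"
    and CB: "\<forall>B. mclq V E B \<and> card B \<ge> 2 \<longrightarrow> (\<Sum>e\<in>{e\<in>E. e \<subseteq> B}. g e) \<le> (real (card B) - 1) / 2"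
    and "U \<subseteq> V" "mclq V E S" "S \<subseteq> U" "S \<noteq> {}"
    and "\<forall>a\<in>U. \<exists>s\<in>S. rch E U a s"
    and "\<forall>a\<in>U - S. \<forall>b. {a, b} \<in> E \<longrightarrow> b \<in> U"
  shows "(\<Sum>e\<in>{e\<in>E. e \<subseteq> U \<and> \<not> e \<subseteq> S}. g e) \<le> (real (card U) - real (card S)) / 2"
  using assms(3-)
proof (induction "card (U - S)" arbitrary: U S rule: less_induct)
  case less
  note UV = less.prems(1) and Sm = less.prems(2) and SU = less.prems(3) and Sne = less.prems(4)
    and reachU = less.prems(5) and closed = less.prems(6)
  have sg: "simple_graph V E" using bg unfolding block_graph_def by auto
  have fV: "finite V" using sg unfolding simple_graph_def by auto
  have fE: "finite E" using finite_E[OF sg] .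
  have fU: "finite U" using UV fV finite_subset by blast
  have SV: "S \<subseteq> V" and cS: "clq E S" using Sm unfolding mclq_def by auto
  show ?case
  proof (cases "U = S")
    case True
    then have "{e\<in>E. e \<subseteq> U \<and> \<not> e \<subseteq> S} = {}" by auto
    then show ?thesis using True by simp
  next
    case False
    then obtain a0 where a0: "a0 \<in> U - S" using SU by auto
    then obtain s0 where "s0 \<in> S" "rch E U a0 s0" using reachU by auto
    then have "\<exists>u z. u \<in> U - S \<and> z \<in> S \<and> {u, z} \<in> E"
      using a0 by (intro enter_S[of E U a0 s0 S]) auto
    then obtain u z where uz: "u \<in> U - S" "z \<in> S" "{u, z} \<in> E" by blast
    define D where "D = {t. rch E (V - S) u t}"
    have uV: "u \<in> V" using uz UV by auto
    have uD: "u \<in> D" unfolding D_def rch_def by simp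
    have rD: "rch E D u t" if "rch E (V - S) u t" for t
      using that unfolding rch_def
    proof (induction rule: rtranclp_induct)
      case (step t t')
      have tD: "t \<in> D" using step(1) unfolding D_def rch_def by simp
      have "(\<lambda>a b. {a, b} \<in> E \<and> a \<in> V - S \<and> b \<in> V - S)\<^sup>*\<^sup>* u t'"
        using step(1,2) by (rule rtranclp.rtrancl_into_rtrancl)
      then have t'D: "t' \<in> D" unfolding D_def rch_def by simp
      have "{t, t'} \<in> E" using step(2) by simp
      then have "{t, t'} \<in> E \<and> t \<in> D \<and> t' \<in> D" using tD t'D by simp
      then show ?case using step(3) unfolding rch_def by (rule rtranclp.rtrancl_into_rtrancl[rotated])
    qed simp
    have DU: "D \<subseteq> U - S"
    proof
      fix t assume "t \<in> D"
      then have "rch E (V - S) u t" unfolding D_def by simp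
      then show "t \<in> U - S" unfolding rch_def
      proof (induction rule: rtranclp_induct)
        case base then show ?case using uz by simp
      next
        case (step t t')
        then have "t \<in> U - S" "{t, t'} \<in> E" "t' \<notin> S" by auto
        then show ?case using closed by blast
      qed
    qed
    have P1: "b \<in> D \<or> b = z" if t: "t \<in> D" and e: "{t, b} \<in> E" for t b
    proof -
      have tUS: "t \<in> U - S" using t DU by auto
      then have bU: "b \<in> U" using closed e by auto
      show ?thesis
      proof (cases "b \<in> S")
        case False
        have r: "rch E (V - S) u t" using t unfolding D_def by simp
        have tb: "t \<in> V - S" "b \<in> V - S" using tUS bU UV False by auto
        have "rch E (V - S) u b" by (rule rch_step[OF r e tb(1) tb(2)])
        then show ?thesis unfolding D_def by simp
      next
        case True
        have r: "rch E (V - S) u t" using t unfolding D_def by simp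
        have ut: "u \<in> V - S" "t \<in> V - S" using uz(1) tUS UV by auto
        have "z = b" by (rule attach[OF bg Sm uz(2) True ut(1) ut(2) uz(3) e r])
        then show ?thesis by simp
      qed
    qed
    have zD: "z \<notin> D" using DU uz by auto
    have e2: "{z, u} \<in> E" using uz(3) by (metis insert_commute)
    have "clq E {z, u}" using uz(3) e2 unfolding clq_def by blast
    moreover have "{z, u} \<subseteq> V" using uz UV SV by auto
    ultimately obtain B where B: "mclq V E B" "{z, u} \<subseteq> B" using mclq_exists[OF fV] by blast
    have cB: "clq E B" and BV: "B \<subseteq> V" using B(1) unfolding mclq_def by auto
    have zu: "z \<noteq> u" using uz by auto
    have BU1: "B \<subseteq> D \<union> {z}"
    proof
      fix t assume t: "t \<in> B"
      show "t \<in> D \<union> {z}"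
      proof (cases "t = z \<or> t = u")
        case True then show ?thesis using uD by auto
      next
        case False
        then have "{u, t} \<in> E" using cB t B(2) unfolding clq_def by auto
        then show ?thesis using P1[OF uD] by auto
      qed
    qed
    have fD: "finite D" using DU fU finite_subset by blast
    have cardB: "card B \<ge> 2"
    proof -
      have "finite B" using BV fV finite_subset by blast
      then have "card {z, u} \<le> card B" using B(2) card_mono by blast
      then show ?thesis using zu by simp
    qed
    define U1 where "U1 = D \<union> {z}"
    define U2 where "U2 = U - D"
    have IH1: "(\<Sum>e\<in>{e\<in>E. e \<subseteq> U1 \<and> \<not> e \<subseteq> B}. g e) \<le> (real (card U1) - real (card B)) / 2"
    proof (rule less.hyps)
      have "U1 - B \<subseteq> D - {u}" unfolding U1_def using B(2) by auto
      then have "card (U1 - B) \<le> card (D - {u})" using fD by (intro card_mono) auto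
      also have "\<dots> < card D" by (rule card_Diff1_less[OF fD uD])
      also have "\<dots> \<le> card (U - S)" using DU fU by (intro card_mono) auto
      finally show "card (U1 - B) < card (U - S)" .
      show "U1 \<subseteq> V" unfolding U1_def using DU UV uz SV by auto
      show "mclq V E B" by (rule B(1))
      show "B \<subseteq> U1" unfolding U1_def by (rule BU1)
      show "B \<noteq> {}" using B(2) by auto
      show "\<forall>a\<in>U1. \<exists>s\<in>B. rch E U1 a s"
      proof
        fix a assume a: "a \<in> U1"
        show "\<exists>s\<in>B. rch E U1 a s"
        proof (cases "a = z")
          case True then show ?thesis using B(2) unfolding rch_def by auto
        next
          case False
          then have "rch E (V - S) u a" using a unfolding U1_def D_def by auto
          then have "rch E D u a" by (rule rD)
          then have "rch E U1 u a" unfolding U1_def by (rule rch_mono) auto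
          then have "rch E U1 a u" by (rule rch_sym)
          then show ?thesis using B(2) by auto
        qed
      qed
      show "\<forall>a\<in>U1 - B. \<forall>b. {a, b} \<in> E \<longrightarrow> b \<in> U1"
        using P1 B(2) unfolding U1_def by blast
    qed
    have IH2: "(\<Sum>e\<in>{e\<in>E. e \<subseteq> U2 \<and> \<not> e \<subseteq> S}. g e) \<le> (real (card U2) - real (card S)) / 2"
    proof (rule less.hyps)
      have "U2 - S \<subseteq> (U - S) - {u}" unfolding U2_def using uD by auto
      then have "card (U2 - S) \<le> card ((U - S) - {u})" using fU by (intro card_mono) auto
      also have "\<dots> < card (U - S)" using fU uz by (intro card_Diff1_less) auto
      finally show "card (U2 - S) < card (U - S)" .
      show "U2 \<subseteq> V" unfolding U2_def using UV by auto
      show "mclq V E S" by (rule Sm)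
      show "S \<subseteq> U2" unfolding U2_def using SU DU by auto
      show "S \<noteq> {}" by (rule Sne)
      have key: "rch E U a s \<Longrightarrow> s \<in> S \<Longrightarrow> a \<notin> D \<Longrightarrow> \<exists>s'\<in>S. rch E U2 a s'" for a s
        unfolding rch_def
      proof (induction rule: converse_rtranclp_induct)
        case base then show ?case by auto
      next
        case (step a a')
        show ?case
        proof (cases "a \<in> S")
          case True then show ?thesis by auto
        next
          case aS: False
          have a'D: "a' \<notin> D"
          proof
            assume "a' \<in> D"
            moreover have "{a', a} \<in> E" using step(1) by (simp add: insert_commute)
            ultimately have "a \<in> D \<or> a = z" using P1 by blast
            then show False using step(5) aS uz(2) by auto
          qed
          then obtain s' where s': "s' \<in> S" "(\<lambda>a b. {a, b} \<in> E \<and> a \<in> U2 \<and> b \<in> U2)\<^sup>*\<^sup>* a' s'"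
            using step(3,4) by auto
          have "a \<in> U2" "a' \<in> U2" using step(1,5) a'D unfolding U2_def by auto
          then show ?thesis using s' step(1) by (auto intro: converse_rtranclp_into_rtranclp)
        qed
      qed
      show "\<forall>a\<in>U2. \<exists>s\<in>S. rch E U2 a s"
      proof
        fix a assume a: "a \<in> U2"
        then obtain s where "s \<in> S" "rch E U a s" using reachU unfolding U2_def by auto
        then show "\<exists>s\<in>S. rch E U2 a s" using key[of a s] a unfolding U2_def rch_def by auto
      qed
      show "\<forall>a\<in>U2 - S. \<forall>b. {a, b} \<in> E \<longrightarrow> b \<in> U2"
      proof (intro ballI allI impI)
        fix a b assume a: "a \<in> U2 - S" and e: "{a, b} \<in> E"
        then have "b \<in> U" using closed unfolding U2_def by auto
        moreover have "b \<notin> D"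
        proof
          assume "b \<in> D"
          moreover have "{b, a} \<in> E" using e by (simp add: insert_commute)
          ultimately have "a \<in> D \<or> a = z" using P1 by blast
          then show False using a uz(2) unfolding U2_def by auto
        qed
        ultimately show "b \<in> U2" unfolding U2_def by auto
      qed
    qed
    have CBB: "(\<Sum>e\<in>{e\<in>E. e \<subseteq> B}. g e) \<le> (real (card B) - 1) / 2" using CB B(1) cardB by blast
    define X where "X = {e\<in>E. e \<subseteq> U \<and> \<not> e \<subseteq> S}"
    define X1a where "X1a = {e\<in>E. e \<subseteq> B}"
    define X1b where "X1b = {e\<in>E. e \<subseteq> U1 \<and> \<not> e \<subseteq> B}"
    define X2 where "X2 = {e\<in>E. e \<subseteq> U2 \<and> \<not> e \<subseteq> S}"
    have Xeq: "X = (X1a \<union> X1b) \<union> X2"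
    proof (intro equalityI subsetI)
      fix e assume e: "e \<in> X"
      then have eE: "e \<in> E" unfolding X_def by auto
      then obtain p q where pq: "e = {p, q}" "p \<noteq> q" using edge_2[OF sg] by metis
      show "e \<in> (X1a \<union> X1b) \<union> X2"
      proof (cases "p \<in> D \<or> q \<in> D")
        case True
        have "{p, q} \<in> E" "{q, p} \<in> E" using eE pq by (auto simp: insert_commute)
        then have "p \<in> D \<union> {z}" "q \<in> D \<union> {z}" using True P1[of p q] P1[of q p] by auto
        then have "e \<subseteq> U1" unfolding U1_def using pq by auto
        then show ?thesis unfolding X1a_def X1b_def using eE by auto
      next
        case False
        then have "e \<subseteq> U2" using e pq unfolding X_def U2_def by auto
        then show ?thesis unfolding X2_def using e unfolding X_def by auto
      qed
    next
      fix e assume e: "e \<in> (X1a \<union> X1b) \<union> X2"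
      then have eE: "e \<in> E" unfolding X1a_def X1b_def X2_def by auto
      then obtain p q where pq: "e = {p, q}" "p \<noteq> q" using edge_2[OF sg] by metis
      show "e \<in> X"
      proof (cases "e \<in> X2")
        case True then show ?thesis unfolding X2_def X_def U2_def by auto
      next
        case False
        then have "e \<subseteq> U1" using e BU1 unfolding X1a_def X1b_def U1_def by auto
        then have "p \<in> D \<or> q \<in> D" using pq unfolding U1_def by auto
        then have "\<not> e \<subseteq> S" using pq DU by auto
        moreover have "e \<subseteq> U" using \<open>e \<subseteq> U1\<close> DU uz SU unfolding U1_def by auto
        ultimately show ?thesis using eE unfolding X_def by auto
      qed
    qed
    have d1: "X1a \<inter> X1b = {}" unfolding X1a_def X1b_def by auto
    have d2: "(X1a \<union> X1b) \<inter> X2 = {}"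
    proof (rule ccontr)
      assume "(X1a \<union> X1b) \<inter> X2 \<noteq> {}"
      then obtain e where e: "e \<in> X1a \<union> X1b" "e \<in> X2" by auto
      then have eE: "e \<in> E" unfolding X2_def by auto
      then obtain p q where pq: "e = {p, q}" "p \<noteq> q" using edge_2[OF sg] by metis
      have "e \<subseteq> U1" using e(1) BU1 unfolding X1a_def X1b_def U1_def by auto
      moreover have "e \<subseteq> U2" using e(2) unfolding X2_def by auto
      ultimately have "e \<subseteq> {z}" unfolding U1_def U2_def by auto
      then show False using pq by auto
    qed
    have fX: "finite X1a" "finite X1b" "finite X2" unfolding X1a_def X1b_def X2_def using fE by auto
    have "(\<Sum>e\<in>X. g e) = (\<Sum>e\<in>X1a. g e) + (\<Sum>e\<in>X1b. g e) + (\<Sum>e\<in>X2. g e)"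
      unfolding Xeq using fX d1 d2 by (simp add: sum.union_disjoint)
    also have "\<dots> \<le> (real (card B) - 1) / 2 + (real (card U1) - real (card B)) / 2
        + (real (card U2) - real (card S)) / 2"
      using CBB IH1 IH2 unfolding X1a_def X1b_def X2_def by linarith
    also have "\<dots> = (real (card U) - real (card S)) / 2"
    proof -
      have "card U1 = card D + 1" unfolding U1_def using zD fD by simp
      moreover have "card U2 = card U - card D" unfolding U2_def using DU fD by (subst card_Diff_subset) auto
      moreover have "card D \<le> card U" using DU fU by (intro card_mono) auto
      ultimately show ?thesis by (simp add: of_nat_diff field_simps)
    qed
    finally show ?thesis unfolding X_def .
  qed
qed

definition sw :: "'a \<Rightarrow> 'a \<Rightarrow> 'a \<Rightarrow> 'a" where
  "sw a b x = (if x = a then b else if x = b then a else x)"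

lemma sw_inj: "inj (sw a b)"
  unfolding inj_def sw_def by auto

lemma sw_image: "a \<in> S \<Longrightarrow> b \<in> S \<Longrightarrow> sw a b ` S = S"
  unfolding sw_def by (auto simp: image_def)

lemma finite_cycles:
  assumes "finite V"
  shows "finite {c. is_cycle V E c \<and> e \<in> cycle_edges c}"
proof (rule finite_subset[OF _ finite_subset_distinct[OF assms]])
  show "{c. is_cycle V E c \<and> e \<in> cycle_edges c} \<subseteq> {xs. set xs \<subseteq> V \<and> distinct xs}"
    unfolding is_cycle_def by auto
qed

lemma Cw_ge:
  assumes "finite V" "is_cycle V E c" "e \<in> cycle_edges c"
  shows "cycle_weight w c \<le> Cw V E w e"
proof -
  have ex: "\<exists>c. is_cycle V E c \<and> e \<in> cycle_edges c" using assms by blast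
  have "cycle_weight w c \<in> cycle_weight w ` {c. is_cycle V E c \<and> e \<in> cycle_edges c}" using assms by auto
  then have "cycle_weight w c \<le> Max (cycle_weight w ` {c. is_cycle V E c \<and> e \<in> cycle_edges c})"
    using finite_cycles[OF assms(1)] by simp
  then show ?thesis unfolding Cw_def using ex by simp
qed

lemma ce_nth: "Suc i < length c \<Longrightarrow> {c ! i, c ! Suc i} \<in> cycle_edges c"
  unfolding cycle_edges_def by (rule CollectI, rule exI[of _ i]) simp

lemma cw_pos:
  assumes "is_cycle V E c" "\<forall>e\<in>E. w e > 0"
  shows "cycle_weight w c > 0"
proof -
  have fin: "finite (cycle_edges c)" unfolding cycle_edges_def by simp
  have "{c ! 0, c ! Suc 0} \<in> cycle_edges c" using assms(1) unfolding is_cycle_def by (intro ce_nth) simp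
  then have ne: "cycle_edges c \<noteq> {}" by auto
  have "\<forall>e\<in>cycle_edges c. w e > 0" using assms unfolding is_cycle_def by auto
  then show ?thesis unfolding cycle_weight_def using fin ne by (simp add: sum_pos)
qed

lemma perm_cycle:
  assumes SV: "S \<subseteq> V" and cS: "clq E S" and m: "card S \<ge> 3" and p: "distinct p" "set p = S"
  shows "is_cycle V E p"
proof -
  have len: "length p = card S" using p distinct_card by metis
  have "cycle_edges p \<subseteq> E"
  proof
    fix e assume "e \<in> cycle_edges p"
    then obtain i where i: "i < length p" "e = {p ! i, p ! ((i + 1) mod length p)}"
      unfolding cycle_edges_def by auto
    have lp: "length p > 0" using i(1) by linarith
    have j: "(i + 1) mod length p < length p" using lp by simp
    have "(i + 1) mod length p \<noteq> i"
    proof (cases "i + 1 < length p")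
      case True then show ?thesis by simp
    next
      case False then have "i + 1 = length p" using i(1) by simp
      then show ?thesis using len m by simp
    qed
    then have "p ! i \<noteq> p ! ((i + 1) mod length p)" using p(1) i(1) j by (simp add: nth_eq_iff_index_eq)
    moreover have "p ! i \<in> S" "p ! ((i + 1) mod length p) \<in> S" using i(1) j p(2) nth_mem by blast+
    ultimately show "e \<in> E" using cS i(2) unfolding clq_def by blast
  qed
  then show ?thesis unfolding is_cycle_def using len m p SV by auto
qed

lemma ce_img: "cycle_edges c = (\<lambda>i. {c ! i, c ! ((i + 1) mod length c)}) ` {..<length c}"
  unfolding cycle_edges_def by auto

lemma ce_map: "cycle_edges (map f c) = (\<lambda>e. f ` e) ` cycle_edges c"
proof -
  have "cycle_edges (map f c) = (\<lambda>i. {f (c ! i), f (c ! ((i + 1) mod length c))}) ` {..<length c}"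
    unfolding ce_img length_map
  proof (rule image_cong[OF refl])
    fix i assume "i \<in> {..<length c}"
    then have "length c > 0" by auto
    then have "(i + 1) mod length c < length c" by simp
    then show "{map f c ! i, map f c ! ((i + 1) mod length c)} = {f (c ! i), f (c ! ((i + 1) mod length c))}"
      using \<open>i \<in> {..<length c}\<close> by simp
  qed
  also have "\<dots> = (\<lambda>e. f ` e) ` ((\<lambda>i. {c ! i, c ! ((i + 1) mod length c)}) ` {..<length c})"
    by (simp add: image_image)
  finally show ?thesis unfolding ce_img[of c] .
qed

lemma N_le:
  assumes uv: "u \<in> S" "v \<in> S" "u \<noteq> v" and uv': "u' \<in> S" "v' \<in> S" "u' \<noteq> v'" and fin: "finite S"
  shows "card {p\<in>{p. distinct p \<and> set p = S}. {u, v} \<in> cycle_edges p}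
       \<le> card {p\<in>{p. distinct p \<and> set p = S}. {u', v'} \<in> cycle_edges p}"
proof -
  define t where "t = sw u u' v"
  define \<sigma> where "\<sigma> = sw t v' \<circ> sw u u'"
  have tS: "t \<in> S" unfolding t_def sw_def using uv uv' by simp
  have tu': "t \<noteq> u'"
  proof (cases "v = u'")
    case True
    then have "t = u" unfolding t_def sw_def using uv(3) by simp
    then show ?thesis using True uv(3) by simp
  next
    case False
    then have "t = v" unfolding t_def sw_def using uv(3) by simp
    then show ?thesis using False by simp
  qed
  have "sw u u' u = u'" unfolding sw_def by simp
  moreover have "sw t v' u' = u'" unfolding sw_def using tu' uv'(3) by simp
  ultimately have su: "\<sigma> u = u'" unfolding \<sigma>_def by simp
  have "sw t v' t = v'" unfolding sw_def by simp
  then have sv: "\<sigma> v = v'" unfolding \<sigma>_def t_def by simp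
  have inj\<sigma>: "inj \<sigma>" unfolding \<sigma>_def by (rule inj_compose[OF sw_inj sw_inj])
  have "\<sigma> ` S = sw t v' ` (sw u u' ` S)" unfolding \<sigma>_def image_comp by (rule refl)
  then have imS: "\<sigma> ` S = S" unfolding sw_image[OF uv(1) uv'(1)] sw_image[OF tS uv'(2)] .
  have finR: "finite {p\<in>{p. distinct p \<and> set p = S}. {u', v'} \<in> cycle_edges p}"
    by (rule finite_subset[OF _ finite_subset_distinct[OF fin]]) auto
  show ?thesis
  proof (rule card_inj_on_le[of "map \<sigma>"])
    show "inj_on (map \<sigma>) {p\<in>{p. distinct p \<and> set p = S}. {u, v} \<in> cycle_edges p}"
      using inj\<sigma> by (meson inj_mapI inj_on_subset subset_UNIV)
    show "map \<sigma> ` {p\<in>{p. distinct p \<and> set p = S}. {u, v} \<in> cycle_edges p}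
        \<subseteq> {p\<in>{p. distinct p \<and> set p = S}. {u', v'} \<in> cycle_edges p}"
    proof
      fix q assume "q \<in> map \<sigma> ` {p\<in>{p. distinct p \<and> set p = S}. {u, v} \<in> cycle_edges p}"
      then obtain p where p: "distinct p" "set p = S" "{u, v} \<in> cycle_edges p" and q: "q = map \<sigma> p" by auto
      have "distinct (map \<sigma> p)" using p(1) inj_on_subset[OF inj\<sigma> subset_UNIV] by (simp add: distinct_map)
      moreover have "set (map \<sigma> p) = S" using imS p(2) by simp
      moreover have "\<sigma> ` {u, v} = {u', v'}" using su sv by simp
      then have "{u', v'} \<in> cycle_edges (map \<sigma> p)"
        unfolding ce_map using p(3) by (metis image_eqI)
      ultimately show "q \<in> {p\<in>{p. distinct p \<and> set p = S}. {u', v'} \<in> cycle_edges p}"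
        unfolding q by simp
    qed
    show "finite {p\<in>{p. distinct p \<and> set p = S}. {u', v'} \<in> cycle_edges p}" by (rule finR)
  qed
qed

lemma DC:
  fixes h :: "'a set \<Rightarrow> real"
  assumes fP: "finite P" and fES: "finite ES" and sub: "\<forall>p\<in>P. cycle_edges p \<subseteq> ES"
  shows "(\<Sum>p\<in>P. \<Sum>e\<in>cycle_edges p. h e) = (\<Sum>e\<in>ES. h e * real (card {p\<in>P. e \<in> cycle_edges p}))"
proof -
  have "(\<Sum>p\<in>P. \<Sum>e\<in>cycle_edges p. h e) = (\<Sum>p\<in>P. \<Sum>e\<in>ES. if e \<in> cycle_edges p then h e else 0)"
  proof (rule sum.cong[OF refl])
    fix p assume "p \<in> P"
    then have "ES \<inter> cycle_edges p = cycle_edges p" using sub by auto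
    then show "(\<Sum>e\<in>cycle_edges p. h e) = (\<Sum>e\<in>ES. if e \<in> cycle_edges p then h e else 0)"
      using sum.inter_restrict[OF fES, of h "cycle_edges p"] by simp
  qed
  also have "\<dots> = (\<Sum>e\<in>ES. \<Sum>p\<in>P. if e \<in> cycle_edges p then h e else 0)" by (rule sum.swap)
  also have "\<dots> = (\<Sum>e\<in>ES. h e * real (card {p\<in>P. e \<in> cycle_edges p}))"
  proof (rule sum.cong[OF refl])
    fix e
    have "(\<Sum>p\<in>P. if e \<in> cycle_edges p then h e else 0) = (\<Sum>p\<in>P \<inter> {p. e \<in> cycle_edges p}. h e)"
      using sum.inter_restrict[OF fP, of "\<lambda>_. h e" "{p. e \<in> cycle_edges p}"] by simp
    also have "P \<inter> {p. e \<in> cycle_edges p} = {p\<in>P. e \<in> cycle_edges p}" by auto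
    finally show "(\<Sum>p\<in>P. if e \<in> cycle_edges p then h e else 0) = h e * real (card {p\<in>P. e \<in> cycle_edges p})"
      by simp
  qed
  finally show ?thesis .
qed

lemma card_ES:
  assumes sg: "simple_graph V E" and SV: "S \<subseteq> V" and cS: "clq E S" and fS: "finite S"
  shows "2 * real (card {e\<in>E. e \<subseteq> S}) = real (card S) * (real (card S) - 1)"
proof -
  have "{e\<in>E. e \<subseteq> S} = {B. B \<subseteq> S \<and> card B = 2}"
  proof (intro equalityI subsetI)
    fix e assume e: "e \<in> {e\<in>E. e \<subseteq> S}"
    then obtain x y where "e = {x, y}" "x \<noteq> y" using edge_2[OF sg] by blast
    then show "e \<in> {B. B \<subseteq> S \<and> card B = 2}" using e by auto
  next
    fix e assume e: "e \<in> {B. B \<subseteq> S \<and> card B = 2}"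
    then obtain x y where "e = {x, y}" "x \<noteq> y" by (auto simp: card_2_iff)
    then show "e \<in> {e\<in>E. e \<subseteq> S}" using e cS unfolding clq_def by auto
  qed
  then have "card {e\<in>E. e \<subseteq> S} = card S choose 2" using n_subsets[OF fS, of 2] by simp
  also have "\<dots> = card S * (card S - 1) div 2" by (rule choose_two)
  finally have c: "card {e\<in>E. e \<subseteq> S} = card S * (card S - 1) div 2" .
  have "even (card S * (card S - 1))" by (cases "even (card S)") auto
  then have "2 * card {e\<in>E. e \<subseteq> S} = card S * (card S - 1)" unfolding c by simp
  then have "2 * real (card {e\<in>E. e \<subseteq> S}) = real (card S * (card S - 1))" by (metis of_nat_mult of_nat_numeral)
  also have "\<dots> = real (card S) * (real (card S) - 1)"
  proof (cases "card S")
    case 0 then show ?thesis by simp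
  next
    case (Suc k) then show ?thesis by (simp add: algebra_simps)
  qed
  finally show ?thesis .
qed

lemma CL:
  assumes sg: "simple_graph V E" and wpos: "\<forall>e\<in>E. w e > 0" and SV: "S \<subseteq> V"
    and cS: "clq E S" and m3: "card S \<ge> 3"
  shows "(\<Sum>e\<in>{e\<in>E. e \<subseteq> S}. w e / Cw V E w e) \<le> (real (card S) - 1) / 2
    \<and> ((\<Sum>e\<in>{e\<in>E. e \<subseteq> S}. w e / Cw V E w e) \<ge> (real (card S) - 1) / 2 \<longrightarrow>
        (\<forall>p. distinct p \<and> set p = S \<longrightarrow> (\<forall>e\<in>cycle_edges p. Cw V E w e = cycle_weight w p)))"
proof -
  define P where "P = {p. distinct p \<and> set p = S}"
  define ES where "ES = {e\<in>E. e \<subseteq> S}"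
  define g where "g e = w e / Cw V E w e" for e
  define N where "N e = card {p\<in>P. e \<in> cycle_edges p}" for e
  define m where "m = card S"
  have fV: "finite V" using sg unfolding simple_graph_def by auto
  have fS: "finite S" using SV fV finite_subset by blast
  have fE: "finite E" by (rule finite_E[OF sg])
  have fES: "finite ES" unfolding ES_def using fE by simp
  have fP: "finite P" unfolding P_def
    by (rule finite_subset[OF _ finite_subset_distinct[OF fS]]) auto
  obtain p0 where p0: "distinct p0" "set p0 = S" using finite_distinct_list[OF fS] by blast
  have p0P: "p0 \<in> P" unfolding P_def using p0 by simp
  have cyc: "is_cycle V E p" if "p \<in> P" for p
    using that perm_cycle[OF SV cS m3] unfolding P_def by blast
  have lenP: "length p = m" if "p \<in> P" for p
    using that distinct_card unfolding P_def m_def by fastforce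
  have subES: "cycle_edges p \<subseteq> ES" if "p \<in> P" for p
    using cyc[OF that] ce_sub[of _ p] that unfolding ES_def P_def is_cycle_def by blast
  have cardce: "card (cycle_edges p) = m" if "p \<in> P" for p
    using card_ce[of p] cyc[OF that] lenP[OF that] unfolding is_cycle_def by simp
  have m3': "m \<ge> 3" using m3 unfolding m_def .
  have "cycle_edges p0 \<noteq> {}" using cardce[OF p0P] m3' by auto
  then obtain e0 where e0: "e0 \<in> ES" using subES[OF p0P] by blast
  have Nconst: "N e = N e0" if e: "e \<in> ES" for e
  proof -
    obtain u v where uv: "e = {u, v}" "u \<noteq> v" "u \<in> V" "v \<in> V" using e edge_2[OF sg] unfolding ES_def by blast
    obtain u' v' where uv': "e0 = {u', v'}" "u' \<noteq> v'" "u' \<in> V" "v' \<in> V" using e0 edge_2[OF sg] unfolding ES_def by blast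
    have inS: "u \<in> S" "v \<in> S" "u' \<in> S" "v' \<in> S" using e e0 uv uv' unfolding ES_def by auto
    show ?thesis unfolding N_def P_def uv uv'
      using N_le[of u S v u' v'] N_le[of u' S v' u v] inS uv(2) uv'(2) fS by (simp add: le_antisym)
  qed
  define N0 where "N0 = N e0"
  have DC1: "(\<Sum>p\<in>P. \<Sum>e\<in>cycle_edges p. (1::real)) = (\<Sum>e\<in>ES. 1 * real (N e))"
    unfolding N_def using DC[OF fP fES, of "\<lambda>_. 1"] subES by blast
  have "(\<Sum>p\<in>P. \<Sum>e\<in>cycle_edges p. (1::real)) = real (card P) * real m"
    using cardce by simp
  moreover have "(\<Sum>e\<in>ES. 1 * real (N e)) = real (card ES) * real N0"
    using Nconst unfolding N0_def by simp
  ultimately have cnt: "real (card P) * real m = real (card ES) * real N0" using DC1 by simp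
  have cES: "2 * real (card ES) = real m * (real m - 1)"
    unfolding ES_def m_def by (rule card_ES[OF sg SV cS fS])
  have mpos: "real m > 0" using m3' by simp
  have cP: "2 * real (card P) = (real m - 1) * real N0"
  proof -
    have "real m * (2 * real (card P)) = 2 * (real (card P) * real m)" by simp
    also have "\<dots> = (2 * real (card ES)) * real N0" unfolding cnt by simp
    also have "\<dots> = real m * ((real m - 1) * real N0)" unfolding cES by simp
    finally have "real m * (2 * real (card P)) = real m * ((real m - 1) * real N0)" .
    then show ?thesis using mpos by simp
  qed
  have cPpos: "real (card P) > 0" using fP p0P card_gt_0_iff by fastforce
  have N0pos: "real N0 > 0"
  proof -
    have "(real m - 1) * real N0 > 0" using cP cPpos by simp
    then show ?thesis using m3' by (simp add: zero_less_mult_iff)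
  qed
  define T where "T p = (\<Sum>e\<in>cycle_edges p. g e)" for p
  have gle: "g e \<le> w e / cycle_weight w p" and gpos: "w e / cycle_weight w p - g e \<ge> 0"
    if p: "p \<in> P" and e: "e \<in> cycle_edges p" for p e
  proof -
    have eE: "e \<in> E" using cyc[OF p] e unfolding is_cycle_def by auto
    have cwp: "cycle_weight w p > 0" using cw_pos[OF cyc[OF p] wpos] .
    have "cycle_weight w p \<le> Cw V E w e" using Cw_ge[OF fV cyc[OF p] e] .
    then show "g e \<le> w e / cycle_weight w p" unfolding g_def
      using wpos eE cwp by (intro divide_left_mono) auto
    then show "w e / cycle_weight w p - g e \<ge> 0" by simp
  qed
  have sum1: "(\<Sum>e\<in>cycle_edges p. w e / cycle_weight w p) = 1" if p: "p \<in> P" for p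
  proof -
    have cwp: "cycle_weight w p > 0" using cw_pos[OF cyc[OF p] wpos] .
    have "(\<Sum>e\<in>cycle_edges p. w e / cycle_weight w p) = (\<Sum>e\<in>cycle_edges p. w e) / cycle_weight w p"
      by (simp add: sum_divide_distrib)
    then show ?thesis using cwp unfolding cycle_weight_def by simp
  qed
  have slack: "1 - T p = (\<Sum>e\<in>cycle_edges p. w e / cycle_weight w p - g e)" if p: "p \<in> P" for p
    unfolding T_def using sum1[OF p] by (simp add: sum_subtractf)
  have slack_nn: "1 - T p \<ge> 0" if p: "p \<in> P" for p
    unfolding slack[OF p] using gpos[OF p] by (intro sum_nonneg) auto
  have DC2: "(\<Sum>p\<in>P. T p) = real N0 * (\<Sum>e\<in>ES. g e)"
  proof -
    have "(\<Sum>p\<in>P. T p) = (\<Sum>e\<in>ES. g e * real (N e))"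
      unfolding T_def N_def using DC[OF fP fES, of g] subES by blast
    also have "\<dots> = (\<Sum>e\<in>ES. g e * real N0)" using Nconst unfolding N0_def by simp
    also have "\<dots> = real N0 * (\<Sum>e\<in>ES. g e)" by (simp add: sum_distrib_left mult.commute)
    finally show ?thesis .
  qed
  have sumT: "(\<Sum>p\<in>P. T p) \<le> real (card P)"
  proof -
    have "(\<Sum>p\<in>P. T p) \<le> (\<Sum>p\<in>P. 1)" using slack_nn by (intro sum_mono) auto
    then show ?thesis by simp
  qed
  have bound: "(\<Sum>e\<in>ES. g e) \<le> (real m - 1) / 2"
  proof -
    have "real N0 * ((real m - 1) / 2) = real (card P)" using cP by (simp add: algebra_simps)
    then have "real N0 * (\<Sum>e\<in>ES. g e) \<le> real N0 * ((real m - 1) / 2)"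
      using DC2 sumT by linarith
    then show ?thesis using N0pos by simp
  qed
  have eq: "\<forall>p. distinct p \<and> set p = S \<longrightarrow> (\<forall>e\<in>cycle_edges p. Cw V E w e = cycle_weight w p)"
    if ge: "(\<Sum>e\<in>ES. g e) \<ge> (real m - 1) / 2"
  proof (intro allI impI ballI)
    fix p e assume p': "distinct p \<and> set p = S" and e: "e \<in> cycle_edges p"
    have p: "p \<in> P" using p' unfolding P_def by simp
    have "real N0 * ((real m - 1) / 2) \<le> real N0 * (\<Sum>e\<in>ES. g e)"
      using ge N0pos by (intro mult_left_mono) auto
    moreover have "real N0 * ((real m - 1) / 2) = real (card P)" using cP by (simp add: algebra_simps)
    ultimately have "real (card P) \<le> (\<Sum>p\<in>P. T p)" using DC2 by linarith
    then have "(\<Sum>p\<in>P. 1 - T p) \<le> 0" by (simp add: sum_subtractf)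
    moreover have "(\<Sum>p\<in>P. 1 - T p) \<ge> 0" using slack_nn by (intro sum_nonneg) auto
    ultimately have "(\<Sum>p\<in>P. 1 - T p) = 0" by simp
    moreover have "(\<Sum>p\<in>P. 1 - T p) = 0 \<longleftrightarrow> (\<forall>q\<in>P. 1 - T q = 0)"
      by (rule sum_nonneg_eq_0_iff[OF fP slack_nn])
    ultimately have "\<forall>q\<in>P. 1 - T q = 0" by blast
    then have "(\<Sum>e\<in>cycle_edges p. w e / cycle_weight w p - g e) = 0" using slack[OF p] p by simp
    moreover have "finite (cycle_edges p)" unfolding cycle_edges_def by simp
    moreover have "(\<Sum>e\<in>cycle_edges p. w e / cycle_weight w p - g e) = 0 \<longleftrightarrow>
        (\<forall>e\<in>cycle_edges p. w e / cycle_weight w p - g e = 0)"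
      by (rule sum_nonneg_eq_0_iff[OF \<open>finite (cycle_edges p)\<close> gpos[OF p]])
    ultimately have "\<forall>e\<in>cycle_edges p. w e / cycle_weight w p - g e = 0" by blast
    then have weq: "w e / cycle_weight w p = w e / Cw V E w e" using e unfolding g_def by simp
    have eE: "e \<in> E" using cyc[OF p] e unfolding is_cycle_def by auto
    have cwp: "cycle_weight w p > 0" using cw_pos[OF cyc[OF p] wpos] .
    have "cycle_weight w p \<le> Cw V E w e" using Cw_ge[OF fV cyc[OF p] e] .
    then have "Cw V E w e > 0" using cwp by simp
    have "w e \<noteq> 0" using wpos eE by auto
    then have "cycle_weight w p = Cw V E w e" using weq by (simp add: divide_cancel_left)
    then show "Cw V E w e = cycle_weight w p" by simp
  qed
  have gs: "(\<Sum>e\<in>{e\<in>E. e \<subseteq> S}. w e / Cw V E w e) = (\<Sum>e\<in>ES. g e)"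
    unfolding ES_def g_def ..
  show ?thesis unfolding gs m_def[symmetric] using bound eq by blast
qed

lemma CB:
  assumes bg: "block_graph V E" and wpos: "\<forall>e\<in>E. w e > 0" and B: "mclq V E B" and c2: "card B \<ge> 2"
  shows "(\<Sum>e\<in>{e\<in>E. e \<subseteq> B}. w e / Cw V E w e) \<le> (real (card B) - 1) / 2"
proof (cases "card B \<ge> 3")
  case True
  have sg: "simple_graph V E" using bg unfolding block_graph_def by auto
  show ?thesis using CL[OF sg wpos _ _ True] B unfolding mclq_def by blast
next
  case False
  then have "card B = 2" using c2 by simp
  then obtain z u where zu: "B = {z, u}" "z \<noteq> u" by (auto simp: card_2_iff)
  have sg: "simple_graph V E" using bg unfolding block_graph_def by auto
  have ezu: "{z, u} \<in> E" using B zu unfolding mclq_def clq_def by auto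
  have "{e\<in>E. e \<subseteq> B} = {{z, u}}"
  proof (intro equalityI subsetI)
    fix e assume e: "e \<in> {e\<in>E. e \<subseteq> B}"
    then obtain x y where "e = {x, y}" "x \<noteq> y" using edge_2[OF sg] by blast
    then show "e \<in> {{z, u}}" using e zu by auto
  qed (use ezu zu in auto)
  moreover have "Cw V E w {z, u} = 2 * w {z, u}"
  proof -
    have nc: "(\<exists>c. is_cycle V E c \<and> {z, u} \<in> cycle_edges c) = False"
      using bridge_no_cycle[OF bg B[unfolded zu] zu(2)] by simp
    show ?thesis unfolding Cw_def by (simp only: nc if_False)
  qed
  moreover have "w {z, u} > 0" using wpos ezu by auto
  ultimately show ?thesis using \<open>card B = 2\<close> by simp
qed

definition fv :: "('a set \<Rightarrow> real) \<Rightarrow> 'a \<Rightarrow> 'a \<Rightarrow> 'a \<Rightarrow> real" where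
  "fv w v x y = w {v, x} + w {v, y} - w {x, y}"

lemma VI:
  assumes sg: "simple_graph V E" and wpos: "\<forall>e\<in>E. w e > 0" and SV: "S \<subseteq> V"
    and cS: "clq E S" and m4: "card S \<ge> 4"
    and hyp: "\<forall>p. distinct p \<and> set p = S \<longrightarrow> (\<forall>e\<in>cycle_edges p. Cw V E w e = cycle_weight w p)"
  shows "\<exists>a. (\<forall>v\<in>S. a v \<ge> 0) \<and> (\<forall>u\<in>S. \<forall>v\<in>S. u \<noteq> v \<longrightarrow> w {u, v} = (a u + a v) / 2)"
proof -
  have fV: "finite V" using sg unfolding simple_graph_def by auto
  have fS: "finite S" using SV fV finite_subset by blast
  have fourpt: "w {a, b} + w {c, d} = w {a, c} + w {b, d}"
    if d: "distinct [a, b, c, d]" and inS: "{a, b, c, d} \<subseteq> S" for a b c d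
  proof -
    obtain R where R: "distinct R" "set R = S - {a, b, c, d}"
      using finite_distinct_list[of "S - {a, b, c, d}"] fS by blast
    define p where "p = a # b # c # d # R"
    define q where "q = a # c # b # d # R"
    have dp: "distinct p" "set p = S" using d R inS unfolding p_def by auto
    have dq: "distinct q" "set q = S" using d R inS unfolding q_def by auto
    have lp: "length p \<ge> 3" "length q \<ge> 3" unfolding p_def q_def by auto
    have "{p ! 1, p ! Suc 1} \<in> cycle_edges p" by (rule ce_nth) (simp add: p_def)
    then have e1: "{b, c} \<in> cycle_edges p" unfolding p_def by simp
    have "{q ! 1, q ! Suc 1} \<in> cycle_edges q" by (rule ce_nth) (simp add: q_def)
    then have e2: "{b, c} \<in> cycle_edges q" unfolding q_def by (simp add: insert_commute)
    have "cycle_weight w p = cycle_weight w q" using hyp dp dq e1 e2 by metis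
    moreover have "cycle_weight w p = w {a, b} + w {b, c} + w {c, d} + psum w (d # R @ [a])"
      using cw_psum[OF dp(1) lp(1)] unfolding p_def by simp
    moreover have "cycle_weight w q = w {a, c} + w {b, c} + w {b, d} + psum w (d # R @ [a])"
      using cw_psum[OF dq(1) lp(2)] unfolding q_def by (simp add: insert_commute)
    ultimately show ?thesis by simp
  qed
  have nonneg: "fv w v x y \<ge> 0"
    if d: "distinct [x, v, y]" and inS: "{x, v, y} \<subseteq> S" for v x y
  proof -
    obtain R where R: "distinct R" "set R = S - {x, v, y}"
      using finite_distinct_list[of "S - {x, v, y}"] fS by blast
    have "card {x, v, y} = 3" using d by simp
    then have "card (S - {x, v, y}) \<ge> 1" using m4 inS fS by (simp add: card_Diff_subset)
    then have "R \<noteq> []" using R(2) by (metis card.empty empty_set not_one_le_zero)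
    then obtain r R' where rR: "R = r # R'" by (cases R) auto
    define p where "p = x # v # y # R"
    define q where "q = x # y # R"
    have dp: "distinct p" "set p = S" using d R inS unfolding p_def by auto
    have dq: "distinct q" "set q = S - {v}" using d R inS unfolding q_def by auto
    have lp: "length p \<ge> 3" "length q \<ge> 3" unfolding p_def q_def rR by auto
    have "{p ! 2, p ! Suc 2} \<in> cycle_edges p" by (rule ce_nth) (simp add: p_def rR)
    then have e1: "{y, r} \<in> cycle_edges p" unfolding p_def rR by (simp add: numeral_2_eq_2)
    have "{q ! 1, q ! Suc 1} \<in> cycle_edges q" by (rule ce_nth) (simp add: q_def rR)
    then have e2: "{y, r} \<in> cycle_edges q" unfolding q_def rR by simp
    have cq: "is_cycle V E q"
    proof (rule perm_cycle[of "S - {v}"])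
      show "S - {v} \<subseteq> V" using SV by auto
      show "clq E (S - {v})" using cS unfolding clq_def by auto
      show "3 \<le> card (S - {v})" using m4 inS fS by simp
    qed (use dq in auto)
    have "Cw V E w {y, r} = cycle_weight w p" using hyp dp e1 by metis
    moreover have "cycle_weight w q \<le> Cw V E w {y, r}" by (rule Cw_ge[OF fV cq e2])
    moreover have "cycle_weight w p = w {x, v} + w {v, y} + psum w (y # R @ [x])"
      using cw_psum[OF dp(1) lp(1)] unfolding p_def by simp
    moreover have "cycle_weight w q = w {x, y} + psum w (y # R @ [x])"
      using cw_psum[OF dq(1) lp(2)] unfolding q_def by simp
    ultimately show ?thesis unfolding fv_def by (simp add: insert_commute)
  qed
  have sym: "fv w v x y = fv w v y x" for v x y unfolding fv_def by (simp add: insert_commute add.commute)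
  have chg2: "fv w v x y = fv w v x y'"
    if "distinct [v, x, y]" "distinct [v, x, y']" "{v, x, y, y'} \<subseteq> S" for v x y y'
  proof (cases "y = y'")
    case False
    then have "w {v, y} + w {y', x} = w {v, y'} + w {y, x}"
      using fourpt[of v y y' x] that by auto
    then show ?thesis unfolding fv_def by (simp add: insert_commute)
  qed simp
  have wd: "fv w v x y = fv w v x' y'"
    if "distinct [v, x, y]" "distinct [v, x', y']" "{v, x, y, x', y'} \<subseteq> S" for v x y x' y'
  proof (cases "y' = x")
    case True
    show ?thesis
    proof (cases "y = x'")
      case True2: True
      show ?thesis using True True2 sym by metis
    next
      case False2: False
      have "fv w v x y = fv w v y x" by (rule sym)
      also have "\<dots> = fv w v y x'" using chg2[of v y x x'] that True False2 by auto
      also have "\<dots> = fv w v x' y" by (rule sym)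
      also have "\<dots> = fv w v x' x" using chg2[of v x' y x] that True False2 by auto
      finally show ?thesis using True by simp
    qed
  next
    case False
    have "fv w v x y = fv w v x y'" using chg2[of v x y y'] that False by auto
    also have "\<dots> = fv w v y' x" by (rule sym)
    also have "\<dots> = fv w v y' x'" using chg2[of v y' x x'] that False by auto
    also have "\<dots> = fv w v x' y'" by (rule sym)
    finally show ?thesis .
  qed
  define a where "a v = (SOME r. \<exists>x y. x \<in> S \<and> y \<in> S \<and> distinct [v, x, y] \<and> r = fv w v x y)" for v
  have two: "\<exists>x y. x \<in> S \<and> y \<in> S \<and> distinct [v, x, y]" for v
  proof -
    have "card (S - {v}) \<ge> 3" using m4 fS by (auto simp: card_Diff_singleton_if)
    then have "S - {v} \<noteq> {}" by (metis card.empty not_numeral_le_zero)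
    then obtain x where x: "x \<in> S - {v}" by blast
    have "card (S - {v} - {x}) = card (S - {v}) - 1" using x fS by (intro card_Diff_singleton) auto
    then have "card (S - {v} - {x}) \<ge> 2" using \<open>card (S - {v}) \<ge> 3\<close> by linarith
    then have "S - {v} - {x} \<noteq> {}" by (metis card.empty not_numeral_le_zero)
    then obtain y where y: "y \<in> S - {v} - {x}" by blast
    show ?thesis using x y by auto
  qed
  have aeq: "a v = fv w v x y" if "v \<in> S" "x \<in> S" "y \<in> S" "distinct [v, x, y]" for v x y
  proof -
    obtain x0 y0 where xy0: "x0 \<in> S" "y0 \<in> S" "distinct [v, x0, y0]" using two by blast
    have "\<exists>r. \<exists>x y. x \<in> S \<and> y \<in> S \<and> distinct [v, x, y] \<and> r = fv w v x y" using xy0 by blast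
    then have "\<exists>x y. x \<in> S \<and> y \<in> S \<and> distinct [v, x, y] \<and> a v = fv w v x y"
      unfolding a_def by (rule someI_ex)
    then obtain x1 y1 where xy1: "x1 \<in> S" "y1 \<in> S" "distinct [v, x1, y1]" "a v = fv w v x1 y1"
      by blast
    show ?thesis using xy1 wd[of v x1 y1 x y] that by auto
  qed
  show ?thesis
  proof (intro exI conjI ballI impI)
    fix v assume v: "v \<in> S"
    obtain x y where xy: "x \<in> S" "y \<in> S" "distinct [v, x, y]" using two by blast
    have "distinct [x, v, y]" using xy by auto
    then show "a v \<ge> 0" using aeq[OF v xy] nonneg[of x v y] v xy by auto
  next
    fix u v assume uv: "u \<in> S" "v \<in> S" "u \<noteq> v"
    have "card (S - {u, v}) \<ge> 2" using m4 fS uv by (simp add: card_Diff_subset)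
    then have "S - {u, v} \<noteq> {}" by (metis card.empty not_numeral_le_zero)
    then obtain x where x: "x \<in> S" "x \<noteq> u" "x \<noteq> v" by blast
    have "a u = fv w u v x" using aeq uv x by auto
    moreover have "a v = fv w v u x" using aeq uv x by auto
    ultimately show "w {u, v} = (a u + a v) / 2" unfolding fv_def by (simp add: insert_commute)
  qed
qed

theorem corollary3p10:
  fixes V :: "'a set" and E :: "'a set set" and w :: "'a set \<Rightarrow> real"
  assumes "block_graph V E"
    and "\<forall>e\<in>E. w e > 0"
    and "(\<Sum>e\<in>E. w e / Cw V E w e) = (real (card V) - 1) / 2"
  shows "\<forall>VK EK. is_block V E VK EK \<and> is_clique VK EK \<and> card VK \<ge> 4 \<longrightarrow>
           (\<exists>a :: 'a \<Rightarrow> real. (\<forall>v\<in>VK. a v \<ge> 0) \<and>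
              (\<forall>u\<in>VK. \<forall>v\<in>VK. {u, v} \<in> EK \<longrightarrow> w {u, v} = (a u + a v) / 2))"
proof (intro allI impI)
  fix VK EK assume K: "is_block V E VK EK \<and> is_clique VK EK \<and> card VK \<ge> 4"
  note bg = assms(1) and wpos = assms(2) and total = assms(3)
  have sg: "simple_graph V E" using bg unfolding block_graph_def by auto
  have fV: "finite V" using sg unfolding simple_graph_def by auto
  have fE: "finite E" by (rule finite_E[OF sg])
  have sub: "subgraph VK EK V E" using K unfolding is_block_def by auto
  have VKV: "VK \<subseteq> V" and EKE: "EK \<subseteq> E" and EKsub: "\<forall>e\<in>EK. e \<subseteq> VK" using sub unfolding subgraph_def by auto
  have cK: "clq E VK" using K EKE unfolding is_clique_def clq_def by blast
  have m4: "card VK \<ge> 4" using K by simp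
  have VKne: "VK \<noteq> {}" using m4 by auto
  have mK: "mclq V E VK" unfolding mclq_def
  proof (intro conjI allI impI)
    fix Q assume Q: "VK \<subseteq> Q \<and> Q \<subseteq> V \<and> clq E Q"
    have "subgraph Q {e\<in>E. e \<subseteq> Q} V E" using Q unfolding subgraph_def by auto
    moreover have "connected_no_cut Q {e\<in>E. e \<subseteq> Q}" using clq_cnc[of E Q] Q VKne by auto
    moreover have "EK \<subseteq> {e\<in>E. e \<subseteq> Q}" using EKE EKsub Q by auto
    moreover have maxK: "\<forall>VH EH. subgraph VH EH V E \<and> connected_no_cut VH EH \<and> VK \<subseteq> VH \<and> EK \<subseteq> EH
        \<longrightarrow> VH = VK \<and> EH = EK" using K unfolding is_block_def by (elim conjE)
    ultimately show "Q = VK" using maxK[rule_format, of Q "{e\<in>E. e \<subseteq> Q}"] Q by blast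
  qed (use cK VKV in auto)
  define g where "g = (\<lambda>e. w e / Cw V E w e)"
  have CBall: "\<forall>B. mclq V E B \<and> card B \<ge> 2 \<longrightarrow> (\<Sum>e\<in>{e\<in>E. e \<subseteq> B}. g e) \<le> (real (card B) - 1) / 2"
  proof (intro allI impI)
    fix B assume "mclq V E B \<and> card B \<ge> 2"
    then show "(\<Sum>e\<in>{e\<in>E. e \<subseteq> B}. g e) \<le> (real (card B) - 1) / 2"
      unfolding g_def using CB[OF bg wpos] by simp
  qed
  have EV: "e \<subseteq> V" if eE: "e \<in> E" for e
  proof -
    obtain x y where "e = {x, y}" "x \<in> V" "y \<in> V" using edge_2[OF sg eE] by blast
    then show ?thesis by simp
  qed
  have edgeV: "a \<in> V \<and> b \<in> V" if "{a, b} \<in> E" for a b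
    using EV[OF that] by simp
  have gc: "\<forall>x\<in>V. \<forall>y\<in>V. (\<lambda>a b. {a, b} \<in> E)\<^sup>*\<^sup>* x y"
    using bg unfolding block_graph_def graph_connected_def by (elim conjE)
  have mono: "(\<lambda>a b. {a, b} \<in> E) \<le> (\<lambda>a b. {a, b} \<in> E \<and> a \<in> V \<and> b \<in> V)"
    using edgeV by auto
  have reach: "\<forall>a\<in>V. \<exists>s\<in>VK. rch E V a s"
  proof
    fix a assume a: "a \<in> V"
    obtain s where s: "s \<in> VK" using VKne by blast
    then have "(\<lambda>a b. {a, b} \<in> E)\<^sup>*\<^sup>* a s" using gc a VKV by blast
    then have "rch E V a s" unfolding rch_def
      by (rule rtranclp_mono[OF mono, THEN predicate2D])
    then show "\<exists>s\<in>VK. rch E V a s" using s by blast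
  qed
  have closed: "\<forall>a\<in>V - VK. \<forall>b. {a, b} \<in> E \<longrightarrow> b \<in> V" using edgeV by blast
  have rest: "(\<Sum>e\<in>{e\<in>E. e \<subseteq> V \<and> \<not> e \<subseteq> VK}. g e) \<le> (real (card V) - real (card VK)) / 2"
    by (rule R_aux[OF bg CBall subset_refl mK VKV VKne reach closed])
  have "{e\<in>E. e \<subseteq> V \<and> \<not> e \<subseteq> VK} = {e\<in>E. \<not> e \<subseteq> VK}" using EV by blast
  then have rest': "(\<Sum>e\<in>{e\<in>E. \<not> e \<subseteq> VK}. g e) \<le> (real (card V) - real (card VK)) / 2" using rest by simp
  have split: "(\<Sum>e\<in>E. g e) = (\<Sum>e\<in>{e\<in>E. e \<subseteq> VK}. g e) + (\<Sum>e\<in>{e\<in>E. \<not> e \<subseteq> VK}. g e)"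
  proof -
    have "E = {e\<in>E. e \<subseteq> VK} \<union> {e\<in>E. \<not> e \<subseteq> VK}" by auto
    then show ?thesis using fE by (metis (no_types, lifting) sum.union_disjoint finite_Un disjoint_iff mem_Collect_eq)
  qed
  have tot: "(\<Sum>e\<in>E. g e) = (real (card V) - 1) / 2" using total unfolding g_def .
  define A where "A = (\<Sum>e\<in>{e\<in>E. e \<subseteq> VK}. g e)"
  define B where "B = (\<Sum>e\<in>{e\<in>E. \<not> e \<subseteq> VK}. g e)"
  have AB: "(\<Sum>e\<in>E. g e) = A + B" using split unfolding A_def B_def .
  have Ble: "B \<le> (real (card V) - real (card VK)) / 2" using rest' unfolding B_def .
  have "A \<ge> (real (card VK) - 1) / 2" using AB Ble tot by argo
  then have "(\<Sum>e\<in>{e\<in>E. e \<subseteq> VK}. g e) \<ge> (real (card VK) - 1) / 2" unfolding A_def .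
  then have ge: "(\<Sum>e\<in>{e\<in>E. e \<subseteq> VK}. w e / Cw V E w e) \<ge> (real (card VK) - 1) / 2"
    unfolding g_def .
  have "card VK \<ge> 3" using m4 by simp
  then have hyp: "\<forall>p. distinct p \<and> set p = VK \<longrightarrow> (\<forall>e\<in>cycle_edges p. Cw V E w e = cycle_weight w p)"
    using CL[OF sg wpos VKV cK] ge by blast
  obtain a where a: "\<forall>v\<in>VK. a v \<ge> 0" "\<forall>u\<in>VK. \<forall>v\<in>VK. u \<noteq> v \<longrightarrow> w {u, v} = (a u + a v) / 2"
    using VI[OF sg wpos VKV cK m4 hyp] by blast
  show "\<exists>a :: 'a \<Rightarrow> real. (\<forall>v\<in>VK. a v \<ge> 0) \<and>
              (\<forall>u\<in>VK. \<forall>v\<in>VK. {u, v} \<in> EK \<longrightarrow> w {u, v} = (a u + a v) / 2)"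
  proof (intro exI conjI ballI impI)
    fix v assume "v \<in> VK" then show "a v \<ge> 0" using a(1) by blast
  next
    fix u v assume uv: "u \<in> VK" "v \<in> VK" "{u, v} \<in> EK"
    have "u \<noteq> v"
    proof
      assume "u = v"
      then have "{u} \<in> E" using uv EKE by auto
      then obtain x y where "{u} = {x, y}" "x \<noteq> y" using edge_2[OF sg] by blast
      then show False by (metis insertI1 insert_commute singletonD)
    qed
    then show "w {u, v} = (a u + a v) / 2" using a(2) uv by blast
  qed
qed


end
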